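(* Let $(\tau,\ell)$ have law $\rho_0$ and let $\Delta_0=\max\{\ell(v):v\in\tau\}$. Then, as $m\to\infty$, $$\mathbb P(\Delta_0\ge m)\sim\frac{2}{m^2},$$ meaning that the ratio of the two sides tends to 1.
   Context: $\rho_0$ is the law of a Galton–Watson plane tree with offspring law $P(k)=2^{-k-1}$, $k\ge0$, in which the root has label 0 and every other vertex gets its parent's label plus an independent uniform element of $\{-1,0,1\}$. *)

theory Defs
  imports "HOL-Analysis.Analysis" "HOL-Library.Landau_Symbols"
begin

text \<open>Finite labelled plane trees. A vertex is given by the ordered list of its
children; each child carries the label increment (child label minus parent label).
The root has label 0.\<close>
datatype ltree = LT "(int \<times> ltree) list"

fun valid :: "ltree \<Rightarrow> bool" where
  "valid (LT cs) = (\<forall>dc\<in>set cs. fst dc \<in> {-1, 0, 1} \<and> valid (snd dc))"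

text \<open>Probability of a given finite labelled plane tree under rho_0:
each vertex with k children contributes 2^(-k-1) (offspring law) and each
child's increment contributes 1/3 (uniform on {-1,0,1}).\<close>
fun weight :: "ltree \<Rightarrow> real" where
  "weight (LT cs) = (1/2) ^ (length cs + 1) * (1/3) ^ length cs
      * prod_list (map (\<lambda>dc. weight (snd dc)) cs)"

fun maxlab :: "ltree \<Rightarrow> int" where
  "maxlab (LT cs) = Max (insert 0 (set (map (\<lambda>dc. fst dc + maxlab (snd dc)) cs)))"

text \<open>P(Delta_0 \<ge> m) under rho_0 (the critical GW tree is a.s. finite, so its
law is the discrete distribution given by weight on admissible finite trees).\<close>
definition prob_max_ge :: "int \<Rightarrow> real" where
  "prob_max_ge m = infsum weight {t. valid t \<and> maxlab t \<ge> m}"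

end

theory Submission imports Defs begin

lemma weight_nonneg: "weight t \<ge> 0"
proof (induction t rule: weight.induct)
  case (1 cs) thus ?case by (auto intro!: mult_nonneg_nonneg prod_list_nonneg)
qed

lemma maxlab_nonneg: "maxlab t \<ge> 0"
  by (cases t) auto

lemma maxlab_less: "m > 0 \<Longrightarrow> maxlab (LT cs) < m \<longleftrightarrow> (\<forall>c\<in>set cs. fst c + maxlab (snd c) < m)"
  by auto

fun S :: "nat \<Rightarrow> ltree set" where
  "S 0 = {}"
| "S (Suc n) = LT ` {cs. set cs \<subseteq> {-1,0,1} \<times> S n \<and> length cs \<le> Suc n}"

lemma S_finite: "finite (S n)"
  by (induction n) (auto intro!: finite_lists_length_le)

lemma S_valid: "t \<in> S n \<Longrightarrow> valid t"
proof (induction n arbitrary: t)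
  case 0 thus ?case by simp
next
  case (Suc n) thus ?case by fastforce
qed

lemma S_mono_Suc: "S n \<subseteq> S (Suc n)"
proof (induction n)
  case 0 thus ?case by simp
next
  case (Suc n)
  show ?case
  proof
    fix t assume "t \<in> S (Suc n)"
    then obtain cs where "t = LT cs" "set cs \<subseteq> {-1,0,1} \<times> S n" "length cs \<le> Suc n" by auto
    have h: "set cs \<subseteq> {-1,0,1} \<times> S (Suc n)" using \<open>set cs \<subseteq> {-1,0,1} \<times> S n\<close> Suc.IH by blast
    have "LT cs \<in> S (Suc (Suc n))" unfolding S.simps(2)[of "Suc n"]
      by (rule imageI) (use h \<open>length cs \<le> Suc n\<close> in \<open>simp del: S.simps\<close>)
    thus "t \<in> S (Suc (Suc n))" using \<open>t = LT cs\<close> by simp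
  qed
qed

lemma S_mono: "n \<le> k \<Longrightarrow> S n \<subseteq> S k"
  by (induction k rule: dec_induct) (use S_mono_Suc in auto)

lemma valid_S: "valid t \<Longrightarrow> \<exists>n. t \<in> S n"
proof (induction t rule: valid.induct)
  case (1 cs)
  have "\<forall>c\<in>set cs. \<exists>n. snd c \<in> S n" using 1 by auto
  then obtain N where N: "\<And>c. c \<in> set cs \<Longrightarrow> snd c \<in> S (N c)" by metis
  define n where "n = length cs + (\<Sum>c\<in>set cs. N c)"
  have "snd c \<in> S n" if "c \<in> set cs" for c
  proof -
    have "N c \<le> (\<Sum>c\<in>set cs. N c)" using that by (intro member_le_sum) auto
    hence "N c \<le> n" unfolding n_def by simp
    thus ?thesis using N[OF that] S_mono by blast
  qed
  moreover have "fst c \<in> {-1,0,1}" if "c \<in> set cs" for c using 1(2) that by auto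
  ultimately have "set cs \<subseteq> {-1,0,1} \<times> S n" by force
  moreover have "length cs \<le> Suc n" unfolding n_def by simp
  ultimately have "LT cs \<in> S (Suc n)" by auto
  thus ?case by blast
qed

lemma finite_in_S: "finite F \<Longrightarrow> F \<subseteq> {t. valid t} \<Longrightarrow> \<exists>n. F \<subseteq> S n"
proof (induction F rule: finite_induct)
  case empty thus ?case by simp
next
  case (insert x F)
  then obtain n where n: "F \<subseteq> S n" by auto
  have "\<exists>k. x \<in> S k" using insert.prems valid_S by auto
  then obtain k where k: "x \<in> S k" by blast
  have "insert x F \<subseteq> S (n + k)" using n k S_mono[of n "n+k"] S_mono[of k "n+k"] by auto
  thus ?case by blast
qed

lemma prodsum:
  assumes "finite C"
  shows "(\<Sum>cs\<in>{cs. set cs \<subseteq> C \<and> length cs = k}. prod_list (map (f::_\<Rightarrow>real) cs)) = (sum f C)^k"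
proof (induction k)
  case 0
  have "{cs. set cs \<subseteq> C \<and> length cs = 0} = {[]}" by auto
  thus ?case by simp
next
  case (Suc k)
  have eq: "{cs. set cs \<subseteq> C \<and> length cs = Suc k} = (\<lambda>(x,xs). x#xs) ` (C \<times> {cs. set cs \<subseteq> C \<and> length cs = k})"
  proof (intro set_eqI iffI)
    fix cs assume "cs \<in> {cs. set cs \<subseteq> C \<and> length cs = Suc k}"
    thus "cs \<in> (\<lambda>(x,xs). x#xs) ` (C \<times> {cs. set cs \<subseteq> C \<and> length cs = k})"
      by (cases cs) auto
  qed auto
  have inj: "inj_on (\<lambda>(x,xs). x#xs) (C \<times> {cs. set cs \<subseteq> C \<and> length cs = k})"
    by (auto simp: inj_on_def)
  have "(\<Sum>cs\<in>{cs. set cs \<subseteq> C \<and> length cs = Suc k}. prod_list (map f cs))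
      = (\<Sum>p\<in>C \<times> {cs. set cs \<subseteq> C \<and> length cs = k}. f (fst p) * prod_list (map f (snd p)))"
    unfolding eq by (subst sum.reindex[OF inj]) (auto intro!: sum.cong)
  also have "\<dots> = (\<Sum>x\<in>C. \<Sum>cs\<in>{cs. set cs \<subseteq> C \<and> length cs = k}. f x * prod_list (map f cs))"
    by (subst sum.cartesian_product) (simp add: case_prod_beta)
  also have "\<dots> = sum f C * (\<Sum>cs\<in>{cs. set cs \<subseteq> C \<and> length cs = k}. prod_list (map f cs))"
    unfolding sum_distrib_right sum_distrib_left by (rule sum.swap)
  finally show ?case using Suc by simp
qed

lemma lists_le_sum:
  assumes "finite C"
  shows "(\<Sum>cs\<in>{cs. set cs \<subseteq> C \<and> length cs \<le> N}. g cs)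
       = (\<Sum>k\<le>N. \<Sum>cs\<in>{cs. set cs \<subseteq> C \<and> length cs = k}. g cs)"
proof -
  have eq: "{cs. set cs \<subseteq> C \<and> length cs \<le> N} = (\<Union>k\<in>{..N}. {cs. set cs \<subseteq> C \<and> length cs = k})"
    by auto
  show ?thesis unfolding eq
    by (rule sum.UNION_disjoint) (auto intro: finite_lists_length_eq assms)
qed

lemma inj_LT: "inj_on LT A"
  by (auto simp: inj_on_def)

lemma tree_sum:
  assumes "finite C"
  shows "(\<Sum>t\<in>LT ` {cs. set cs \<subseteq> C \<and> length cs \<le> N}. weight t)
       = (\<Sum>k\<le>N. (1/2) * ((\<Sum>c\<in>C. weight (snd c)) / 6)^k)"
proof -
  have "(\<Sum>t\<in>LT ` {cs. set cs \<subseteq> C \<and> length cs \<le> N}. weight t)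
      = (\<Sum>cs\<in>{cs. set cs \<subseteq> C \<and> length cs \<le> N}. weight (LT cs))"
    by (rule sum.reindex[OF inj_LT, unfolded comp_def])
  also have "\<dots> = (\<Sum>k\<le>N. \<Sum>cs\<in>{cs. set cs \<subseteq> C \<and> length cs = k}. weight (LT cs))"
    by (rule lists_le_sum[OF assms])
  also have "\<dots> = (\<Sum>k\<le>N. \<Sum>cs\<in>{cs. set cs \<subseteq> C \<and> length cs = k}.
        (1/2) * (1/6)^k * prod_list (map (\<lambda>c. weight (snd c)) cs))"
  proof (intro sum.cong refl)
    fix k cs assume "cs \<in> {cs. set cs \<subseteq> C \<and> length cs = k}"
    hence "length cs = k" by simp
    thus "weight (LT cs) = (1/2) * (1/6)^k * prod_list (map (\<lambda>c. weight (snd c)) cs)"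
      by (simp add: power_mult_distrib[symmetric])
  qed
  also have "\<dots> = (\<Sum>k\<le>N. (1/2) * (1/6)^k * (\<Sum>c\<in>C. weight (snd c))^k)"
    by (intro sum.cong refl) (simp only: sum_distrib_left[symmetric] prodsum[OF assms])
  also have "\<dots> = (\<Sum>k\<le>N. (1/2) * ((\<Sum>c\<in>C. weight (snd c)) / 6)^k)"
    by (simp add: power_divide)
  finally show ?thesis .
qed

definition T :: "nat \<Rightarrow> real" where "T n = sum weight (S n)"
definition P :: "nat \<Rightarrow> int \<Rightarrow> real" where "P n m = sum weight {t\<in>S n. maxlab t < m}"

lemma sigma_sum:
  "(\<Sum>c\<in>Sigma {-1,0,1::int} B. weight (snd c)) = (\<Sum>d\<in>{-1,0,1::int}. \<Sum>t\<in>B d. weight t)"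
  if "\<And>d. finite (B d)" for B
  using that by (subst sum.Sigma) (auto simp: case_prod_beta)

lemma T_rec: "T (Suc n) = (\<Sum>k\<le>Suc n. (1/2) * (T n / 2)^k)"
proof -
  have "T (Suc n) = (\<Sum>k\<le>Suc n. (1/2) * ((\<Sum>c\<in>Sigma {-1,0,1::int} (\<lambda>_. S n). weight (snd c)) / 6)^k)"
    unfolding T_def S.simps by (rule tree_sum) (auto simp: S_finite)
  also have "(\<Sum>c\<in>Sigma {-1,0,1::int} (\<lambda>_. S n). weight (snd c)) = 3 * T n"
    by (subst sigma_sum) (auto simp: S_finite T_def)
  finally show ?thesis by simp
qed

lemma P_set:
  assumes "m > 0"
  shows "{t\<in>S (Suc n). maxlab t < m}
     = LT ` {cs. set cs \<subseteq> Sigma {-1,0,1} (\<lambda>d. {t\<in>S n. maxlab t < m - d}) \<and> length cs \<le> Suc n}"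
  using assms by (auto simp: image_iff) (fastforce+)

lemma P_rec:
  assumes "m > 0"
  shows "P (Suc n) m = (\<Sum>k\<le>Suc n. (1/2) * ((P n (m+1) + P n m + P n (m-1)) / 6)^k)"
proof -
  have "P (Suc n) m = (\<Sum>k\<le>Suc n. (1/2) * ((\<Sum>c\<in>Sigma {-1,0,1} (\<lambda>d. {t\<in>S n. maxlab t < m - d}). weight (snd c)) / 6)^k)"
    unfolding P_def P_set[OF assms] by (rule tree_sum) (auto simp: S_finite)
  also have "(\<Sum>c\<in>Sigma {-1,0,1} (\<lambda>d. {t\<in>S n. maxlab t < m - d}). weight (snd c)) = P n (m+1) + P n m + P n (m-1)"
    by (subst sigma_sum) (auto simp: S_finite P_def)
  finally show ?thesis .
qed

lemma P_nonpos: "m \<le> 0 \<Longrightarrow> P n m = 0"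
proof -
  assume "m \<le> 0"
  hence e: "{t\<in>S n. maxlab t < m} = {}" using maxlab_nonneg by (auto simp: not_less) (meson le_less_trans not_less)
  show ?thesis unfolding P_def e by simp
qed

lemma P_nonneg: "P n m \<ge> 0"
  unfolding P_def by (rule sum_nonneg) (simp add: weight_nonneg)

lemma P_le_T: "P n m \<le> T n"
  unfolding P_def T_def by (rule sum_mono2) (auto simp: S_finite weight_nonneg)

lemma geom_closed: "(x::real) \<noteq> 1 \<Longrightarrow> (\<Sum>k\<le>N. x^k) = (1 - x^Suc N)/(1-x)"
  by (metis sum_gp_strict lessThan_Suc_atMost)

lemma geom_le: "0 \<le> (x::real) \<Longrightarrow> x < 1 \<Longrightarrow> (\<Sum>k\<le>N. x^k) \<le> 1/(1-x)"
  by (subst geom_closed) (auto intro!: divide_right_mono)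

lemma geom_diff:
  assumes "0 \<le> (y::real)" "y \<le> x" "x < 1"
  shows "(\<Sum>k\<le>N. x^k - y^k) \<le> 1/(1-x) - 1/(1-y)"
proof -
  have "y^Suc N/(1-y) \<le> x^Suc N/(1-x)"
    using assms by (intro frac_le power_mono) auto
  moreover have "(\<Sum>k\<le>N. x^k - y^k) = (1 - x^Suc N)/(1-x) - (1 - y^Suc N)/(1-y)"
    using assms by (simp add: sum_subtractf geom_closed)
  moreover have "(1 - x^Suc N)/(1-x) - (1 - y^Suc N)/(1-y) = (1/(1-x) - 1/(1-y)) - (x^Suc N/(1-x) - y^Suc N/(1-y))"
    by (simp add: diff_divide_distrib)
  ultimately show ?thesis by linarith
qed

lemma step2:
  assumes "0 \<le> (y::real)" "y \<le> x" "x \<le> 1/2"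
  shows "(1/2)*(1/(1-x) - 1/(1-y)) \<le> (x-y)/(1/2+(x-y))"
proof -
  have "0 \<le> ((1-x) - 1/2)*((1-y)+1/2)" using assms by (intro mult_nonneg_nonneg) auto
  moreover have "2*((1-x)*(1-y)) - (1/2+(x-y)) = 2*(((1-x) - 1/2)*((1-y)+1/2))" by (simp add: field_simps)
  ultimately have h: "1/2+(x-y) \<le> 2*((1-x)*(1-y))" by linarith
  have "(1/2)*(1/(1-x) - 1/(1-y)) = (x-y)/(2*((1-x)*(1-y)))"
    using assms by (simp add: field_simps)
  also have "\<dots> \<le> (x-y)/(1/2+(x-y))"
    using assms h by (intro divide_left_mono) auto
  finally show ?thesis .
qed

lemma step3: "0 \<le> (b::real) \<Longrightarrow> b \<le> c \<Longrightarrow> b/(1/2+b) \<le> c/(1/2+c)"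
  by (simp add: divide_simps) (simp add: algebra_simps)

definition ps :: "int \<Rightarrow> real" where "ps m = of_int m * (of_int m + 3) / ((of_int m + 1) * (of_int m + 2))"
definition qs :: "int \<Rightarrow> real" where "qs m = 2 / ((of_int m + 1) * (of_int m + 2))"

lemma ps_qs: "m \<ge> 0 \<Longrightarrow> ps m = 1 - qs m"
proof -
  assume "m \<ge> 0"
  hence "(of_int m + 1 :: real) * (of_int m + 2) \<noteq> 0" by (auto simp: add_eq_0_iff)
  hence "(of_int m + 1 :: real) * (of_int m + 2) > 0" using \<open>m \<ge> 0\<close> by (intro mult_pos_pos) auto
  thus ?thesis unfolding ps_def qs_def by (simp add: field_simps)
qed

lemma qs_pos: "m \<ge> 0 \<Longrightarrow> qs m > 0"
  unfolding qs_def by (intro divide_pos_pos mult_pos_pos) auto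

lemma ps_nonneg: "m \<ge> 0 \<Longrightarrow> ps m \<ge> 0"
  unfolding ps_def by (intro divide_nonneg_nonneg mult_nonneg_nonneg) auto

lemma ps_lt1: "m \<ge> 0 \<Longrightarrow> ps m < 1"
  using ps_qs qs_pos by fastforce

lemma ps_id_real:
  fixes x :: real assumes "x \<ge> 1"
  shows "3 / (6 - ((x+1)*(x+4)/((x+2)*(x+3)) + x*(x+3)/((x+1)*(x+2)) + (x-1)*(x+2)/(x*(x+1))))
       = x*(x+3)/((x+1)*(x+2))"
proof -
  have p: "x \<noteq> 0" "x+1\<noteq>0" "x+2\<noteq>0" "x+3\<noteq>0" using assms by auto
  have h: "(x+1)*(x+4)/((x+2)*(x+3)) + x*(x+3)/((x+1)*(x+2)) + (x-1)*(x+2)/(x*(x+1))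
      = 6 - 3*((x+1)*(x+2))/(x*(x+3))"
    using p by (simp add: divide_simps) (simp add: algebra_simps)
  show ?thesis unfolding h using p by (simp add: divide_simps)
qed

lemma ps_id: "m \<ge> 1 \<Longrightarrow> 3 / (6 - (ps (m+1) + ps m + ps (m-1))) = ps m"
proof -
  assume m: "m \<ge> 1"
  hence x: "(of_int m::real) \<ge> 1" by simp
  have e1: "ps (m+1) = (of_int m+1)*(of_int m+4)/((of_int m+2)*(of_int m+3))"
    unfolding ps_def by (simp add: algebra_simps)
  have e2: "ps (m-1) = (of_int m-1)*(of_int m+2)/(of_int m*(of_int m+1))"
    unfolding ps_def by (simp add: algebra_simps)
  show ?thesis unfolding e1 e2 using ps_id_real[OF x] by (simp add: ps_def)
qed

lemma qs_id_real:
  fixes x :: real assumes "x \<ge> 1"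
  shows "(2/((x+2)*(x+3)) + 2/((x+1)*(x+2)) + 2/(x*(x+1))) / (3 + (2/((x+2)*(x+3)) + 2/((x+1)*(x+2)) + 2/(x*(x+1))))
       = 2/((x+1)*(x+2))"
proof -
  have p: "x \<noteq> 0" "x+1\<noteq>0" "x+2\<noteq>0" "x+3\<noteq>0" "x*(x+3) + 2 \<noteq> 0"
    using assms by auto (smt (verit) mult_nonneg_nonneg)
  have h: "2/((x+2)*(x+3)) + 2/((x+1)*(x+2)) + 2/(x*(x+1)) = 6/(x*(x+3))"
    using p by (simp add: divide_simps) (simp add: algebra_simps)
  show ?thesis unfolding h using p by (simp add: divide_simps) (simp add: algebra_simps)
qed

lemma qs_id: "m \<ge> 1 \<Longrightarrow> (qs (m+1) + qs m + qs (m-1)) / (3 + (qs (m+1) + qs m + qs (m-1))) = qs m"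
proof -
  assume m: "m \<ge> 1"
  hence x: "(of_int m::real) \<ge> 1" by simp
  have e1: "qs (m+1) = 2/((of_int m+2)*(of_int m+3))"
    unfolding qs_def by (simp add: algebra_simps)
  have e2: "qs (m-1) = 2/(of_int m*(of_int m+1))"
    unfolding qs_def by (simp add: algebra_simps)
  show ?thesis unfolding e1 e2 using qs_id_real[OF x] by (simp add: qs_def)
qed

lemma pow_bound: "(n+2)*(n+3) \<le> (2::nat)^(n+3)"
proof (induction n)
  case 0 show ?case by simp
next
  case (Suc n)
  have a: "(Suc n+2)*(Suc n+3) \<le> 2*((n+2)*(n+3))" by (simp add: algebra_simps)
  have b: "2*((n+2)*(n+3)) \<le> 2*(2::nat)^(n+3)" using Suc by simp
  have c: "2*(2::nat)^(n+3) = 2^(Suc n+3)" by (simp add: power_add)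
  show ?case using a b c by linarith
qed

lemma tl_alg:
  fixes a r :: real assumes a: "a \<ge> 0" and h: "r*((a+2)*(a+3)) \<le> 2"
  shows "(a+1)/(a+3) \<le> (1-r)*(a+2)/(a+4)"
proof -
  have e: "(1-r)*(a+2)*(a+3) = (a+1)*(a+4) + 2 - r*((a+2)*(a+3))" by (simp add: algebra_simps)
  have "(a+1)*(a+4) \<le> (1-r)*(a+2)*(a+3)" using e h by linarith
  thus ?thesis using a by (simp add: divide_simps)
qed

lemma r_bound: "((1/2::real)^(n+2))*((real n+2)*(real n+3)) \<le> 2"
proof -
  have "real ((n+2)*(n+3)) \<le> real ((2::nat)^(n+3))" using pow_bound[of n] by (simp only: of_nat_le_iff)
  hence X: "(real n+2)*(real n+3) \<le> 2^(n+3)" by (simp only: of_nat_mult of_nat_add of_nat_numeral of_nat_power)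
  have e1: "(1/2::real)^(n+2) = 1/2^(n+2)" by (simp add: power_one_over)
  have e2: "(2::real)^(n+3) = 2*2^(n+2)" by (simp add: power_add)
  have "(real n+2)*(real n+3) / 2^(n+2) \<le> 2" using X e2 by (subst pos_divide_le_eq) auto
  thus ?thesis unfolding e1 by simp
qed

lemma z_alg: "a \<ge> 0 \<Longrightarrow> (1/2)*(1-r)/(1 - (a/(a+2))/2) = (1-r)*(a+2)/(a+(4::real))"
  by (simp add: divide_simps) (simp add: algebra_simps)

lemma bq: "Bq \<ge> 0 \<Longrightarrow> (Bq/6)/(1/2+Bq/6) = Bq/(3+(Bq::real))"
  by (simp add: divide_simps)

lemma lim_alg: "(x::real) > 0 \<Longrightarrow> 1/((1+inverse x)*(1+2*inverse x)) = 2/((x+1)*(x+2)) / (2/x^2)"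
  by (simp add: divide_simps inverse_eq_divide power2_eq_square)

lemma lim: "(\<lambda>m::nat. (2/((real m+1)*(real m+2))) / (2/(real m)^2)) \<longlonglongrightarrow> 1"
proof -
  have "(\<lambda>m::nat. 1/((1+inverse (real m))*(1+2*inverse(real m)))) \<longlonglongrightarrow> 1/((1+0)*(1+2*0))"
    by (intro tendsto_intros lim_inverse_n) auto
  moreover have "eventually (\<lambda>m::nat. 1/((1+inverse (real m))*(1+2*inverse(real m))) = (2/((real m+1)*(real m+2))) / (2/(real m)^2)) sequentially"
    unfolding eventually_sequentially
    by (intro exI[of _ 1] allI impI) (rule lim_alg, simp)
  ultimately show ?thesis by (simp add: Lim_transform_eventually)
qed

lemma T_nonneg: "T n \<ge> 0"
  unfolding T_def by (rule sum_nonneg) (simp add: weight_nonneg)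

lemma T_le1: "T n \<le> 1"
proof (induction n)
  case 0 show ?case by (simp add: T_def)
next
  case (Suc n)
  have "T (Suc n) = (1/2) * (\<Sum>k\<le>Suc n. (T n/2)^k)" by (simp only: T_rec sum_distrib_left)
  also have "\<dots> \<le> (1/2) * (\<Sum>k\<le>Suc n. (1/2::real)^k)"
    using Suc T_nonneg[of n] by (intro mult_left_mono sum_mono power_mono) auto
  also have "\<dots> \<le> (1/2) * (1/(1-1/2))" by (intro mult_left_mono geom_le) auto
  finally show ?case by simp
qed

lemma P_bound: "m \<ge> 0 \<Longrightarrow> P n m \<le> ps m"
proof (induction n arbitrary: m)
  case 0 thus ?case by (simp add: P_def ps_nonneg)
next
  case (Suc n m)
  show ?case
  proof (cases "m = 0")
    case True thus ?thesis by (simp add: P_nonpos ps_nonneg)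
  next
    case False
    hence m: "m > 0" "m \<ge> 1" using Suc.prems by auto
    define A where "A = P n (m+1) + P n m + P n (m-1)"
    define a where "a = ps (m+1) + ps m + ps (m-1)"
    have A0: "0 \<le> A" unfolding A_def using P_nonneg by (simp add: add_nonneg_nonneg)
    have Aa: "A \<le> a" unfolding A_def a_def using Suc.IH[of "m+1"] Suc.IH[of m] Suc.IH[of "m-1"] m by auto
    have a3: "a < 3" unfolding a_def using ps_lt1[of "m+1"] ps_lt1[of m] ps_lt1[of "m-1"] m by auto
    have "P (Suc n) m = (1/2) * (\<Sum>k\<le>Suc n. (A/6)^k)" by (simp only: P_rec[OF m(1)] A_def sum_distrib_left)
    also have "\<dots> \<le> (1/2) * (\<Sum>k\<le>Suc n. (a/6)^k)" using A0 Aa by (intro mult_left_mono sum_mono power_mono) auto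
    also have "\<dots> \<le> (1/2) * (1/(1-a/6))" using A0 Aa a3 by (intro mult_left_mono geom_le) auto
    also have "\<dots> = 3/(6-a)" using a3 by (simp add: field_simps)
    also have "\<dots> = ps m" unfolding a_def by (rule ps_id[OF m(2)])
    finally show ?thesis .
  qed
qed

lemma Q_bound: "m \<ge> 0 \<Longrightarrow> T n - P n m \<le> qs m"
proof (induction n arbitrary: m)
  case 0 thus ?case using qs_pos[of m] by (simp add: P_def T_def)
next
  case (Suc n m)
  show ?case
  proof (cases "m = 0")
    case True thus ?thesis using T_le1[of "Suc n"] by (simp add: P_nonpos qs_def)
  next
    case False
    hence m: "m > 0" "m \<ge> 1" using Suc.prems by auto
    define A where "A = P n (m+1) + P n m + P n (m-1)"
    define B where "B = (T n - P n (m+1)) + (T n - P n m) + (T n - P n (m-1))"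
    define Bq where "Bq = qs (m+1) + qs m + qs (m-1)"
    define x where "x = T n / 2"
    define y where "y = A/6"
    have y0: "0 \<le> y" unfolding y_def A_def using P_nonneg by (simp add: add_nonneg_nonneg)
    have yx: "y \<le> x" unfolding y_def x_def A_def using P_le_T[of n "m+1"] P_le_T[of n m] P_le_T[of n "m-1"] by auto
    have x12: "x \<le> 1/2" unfolding x_def using T_le1[of n] by auto
    have xy: "x - y = B/6" unfolding x_def y_def A_def B_def by (simp add: field_simps)
    have B0: "0 \<le> B/6" using xy yx by linarith
    have BB: "B \<le> Bq" unfolding B_def Bq_def using Suc.IH[of "m+1"] Suc.IH[of m] Suc.IH[of "m-1"] m by auto
    have Bq0: "0 \<le> Bq" unfolding Bq_def using qs_pos[of "m+1"] qs_pos[of m] qs_pos[of "m-1"] m by auto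
    have "T (Suc n) - P (Suc n) m = (\<Sum>k\<le>Suc n. (1/2)*x^k) - (\<Sum>k\<le>Suc n. (1/2)*y^k)"
      by (simp only: T_rec P_rec[OF m(1)] x_def y_def A_def)
    also have "\<dots> = (1/2) * (\<Sum>k\<le>Suc n. x^k - y^k)"
      by (simp only: sum_distrib_left right_diff_distrib sum_subtractf)
    also have "\<dots> \<le> (1/2) * (1/(1-x) - 1/(1-y))" using y0 yx x12 by (intro mult_left_mono geom_diff) auto
    also have "\<dots> \<le> (x-y)/(1/2+(x-y))" by (rule step2[OF y0 yx x12])
    also have "\<dots> \<le> (Bq/6)/(1/2+Bq/6)" unfolding xy using B0 BB by (intro step3) auto
    also have "\<dots> = Bq/(3+Bq)" by (rule bq[OF Bq0])
    also have "\<dots> = qs m" unfolding Bq_def by (rule qs_id[OF m(2)])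
    finally show ?thesis .
  qed
qed

lemma T_lower: "real n/(real n+2) \<le> T n"
proof (induction n)
  case 0 show ?case by (simp add: T_def)
next
  case (Suc n)
  define a where "a = real n"
  define z where "z = (a/(a+2))/2"
  define r where "r = (1/2::real)^(n+2)"
  have a0: "a \<ge> 0" unfolding a_def by simp
  have z0: "0 \<le> z" and z1: "z \<le> 1/2" unfolding z_def using a0 by (auto simp: divide_simps)
  have "(1/2) * (\<Sum>k\<le>Suc n. z^k) \<le> (1/2) * (\<Sum>k\<le>Suc n. (T n/2)^k)"
    using divide_right_mono[OF Suc.IH, of 2] z0 unfolding z_def a_def by (intro mult_left_mono sum_mono power_mono) auto
  also have "\<dots> = T (Suc n)" by (simp only: T_rec sum_distrib_left)
  finally have 1: "(1/2) * (\<Sum>k\<le>Suc n. z^k) \<le> T (Suc n)" .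
  have "(\<Sum>k\<le>Suc n. z^k) = (1 - z^Suc (Suc n))/(1-z)" using z1 by (intro geom_closed) auto
  moreover have "z^Suc (Suc n) \<le> r" using power_mono[OF z1 z0, of "n+2"] unfolding r_def by (simp only: add_2_eq_Suc')
  ultimately have "(1-r)/(1-z) \<le> (\<Sum>k\<le>Suc n. z^k)" using z1 by (simp add: divide_right_mono)
  hence "(1/2)*((1-r)/(1-z)) \<le> (1/2) * (\<Sum>k\<le>Suc n. z^k)" by (rule mult_left_mono) simp
  hence 2: "(1/2)*((1-r)/(1-z)) \<le> T (Suc n)" using 1 by (rule order_trans)
  have "(1/2)*((1-r)/(1-z)) = (1-r)*(a+2)/(a+4)" unfolding z_def times_divide_eq_right by (rule z_alg[OF a0])
  moreover have "(a+1)/(a+3) \<le> (1-r)*(a+2)/(a+4)"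
    using tl_alg[OF a0] r_bound[of n] unfolding r_def a_def by simp
  moreover have "real (Suc n)/(real (Suc n)+2) = (a+1)/(a+3)" unfolding a_def by (simp add: add.commute)
  ultimately show ?case using 2 by linarith
qed

lemma infsum_bound:
  assumes "A \<subseteq> {t. valid t}" "\<And>n. sum weight (A \<inter> S n) \<le> B"
  shows "weight summable_on A" "infsum weight A \<le> B"
proof -
  have fb: "sum weight F \<le> B" if "finite F" "F \<subseteq> A" for F
  proof -
    have "F \<subseteq> {t. valid t}" using that(2) assms(1) by (rule subset_trans)
    from finite_in_S[OF that(1) this] obtain n where n: "F \<subseteq> S n" ..
    have "sum weight F \<le> sum weight (A \<inter> S n)"
    proof (rule sum_mono2)
      show "finite (A \<inter> S n)" using S_finite[of n] by simp
      show "F \<subseteq> A \<inter> S n" using n that(2) by simp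
      show "0 \<le> weight b" for b by (rule weight_nonneg)
    qed
    thus ?thesis using assms(2)[of n] by linarith
  qed
  have bdd: "bdd_above (sum weight ` {F. F\<subseteq>A \<and> finite F})"
  proof (rule bdd_aboveI[where M=B])
    fix x assume "x \<in> sum weight ` {F. F\<subseteq>A \<and> finite F}"
    then obtain F where F: "F\<subseteq>A" "finite F" "x = sum weight F" by auto
    thus "x \<le> B" using fb[OF F(2) F(1)] by simp
  qed
  show sm: "weight summable_on A"
    by (rule nonneg_bdd_above_summable_on[OF weight_nonneg bdd])
  have "{} \<in> {F. finite F \<and> F \<subseteq> A}" by simp
  hence ne: "{F. finite F \<and> F \<subseteq> A} \<noteq> {}" by auto
  show "infsum weight A \<le> B"
    unfolding infsum_nonneg_is_SUPREMUM_real[OF sm weight_nonneg]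
  proof (rule cSUP_least[OF ne])
    fix F assume "F \<in> {F. finite F \<and> F \<subseteq> A}"
    thus "sum weight F \<le> B" using fb by simp
  qed
qed

lemma lim_one:
  fixes I :: real
  assumes lb: "\<And>n. real n/(real n+2) \<le> I" and ub: "I \<le> 1"
  shows "I = 1"
proof (rule ccontr)
  assume "I \<noteq> 1"
  hence I1: "I < 1" using ub by auto
  obtain n::nat where n: "2/(1-I) < real n" using reals_Archimedean2 by blast
  have h1: "2 < real n*(1-I)" using n I1 by (simp add: pos_divide_less_eq)
  have I0: "I \<ge> 0" using lb[of 0] by simp
  have h2: "I*(real n+2) = I*real n + 2*I" by (simp add: algebra_simps)
  have h3: "real n*(1-I) = real n - I * real n" by (simp add: algebra_simps)
  have "I*(real n+2) < real n" using h1 h2 h3 I1 I0 by argo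
  hence "I < real n/(real n+2)" by (simp add: pos_less_divide_eq)
  with lb[of n] show False by (meson leD)
qed

lemma total:
  shows "weight summable_on {t. valid t}" "infsum weight {t. valid t} = 1"
proof -
  have sub: "S n \<subseteq> {t. valid t}" for n using S_valid by blast
  have e: "{t. valid t} \<inter> S n = S n" for n using sub[of n] by blast
  have b1: "sum weight ({t. valid t} \<inter> S n) \<le> 1" for n unfolding e using T_le1[of n] unfolding T_def .
  have ub: "infsum weight {t. valid t} \<le> 1" and sm: "weight summable_on {t. valid t}"
    using infsum_bound[of "{t. valid t}" 1, OF _ b1] by auto
  show "weight summable_on {t. valid t}" by (rule sm)
  define I where "I = infsum weight {t. valid t}"
  have lb: "real n/(real n+2) \<le> I" for n
  proof -
    have "T n \<le> I" unfolding T_def I_def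
      by (rule finite_sum_le_infsum[OF sm S_finite sub]) (simp add: weight_nonneg)
    thus ?thesis by (rule order_trans[OF T_lower[of n]])
  qed
  have "I = 1" by (rule lim_one[OF lb]) (use ub in \<open>simp add: I_def\<close>)
  thus "infsum weight {t. valid t} = 1" unfolding I_def .
qed

lemma prob_exact: "prob_max_ge (int m) = qs (int m)"
proof -
  define A where "A = {t. valid t \<and> maxlab t \<ge> int m}"
  define B where "B = {t. valid t \<and> maxlab t < int m}"
  have eA: "A \<inter> S n = {t\<in>S n. maxlab t \<ge> int m}" for n unfolding A_def using S_valid by auto
  have eB: "B \<inter> S n = {t\<in>S n. maxlab t < int m}" for n unfolding B_def using S_valid by auto
  have split: "T n = sum weight {t\<in>S n. maxlab t \<ge> int m} + P n (int m)" for n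
  proof -
    have "S n = {t\<in>S n. maxlab t \<ge> int m} \<union> {t\<in>S n. maxlab t < int m}" by auto
    hence "T n = sum weight ({t\<in>S n. maxlab t \<ge> int m} \<union> {t\<in>S n. maxlab t < int m})"
      unfolding T_def by simp
    also have "\<dots> = sum weight {t\<in>S n. maxlab t \<ge> int m} + P n (int m)"
      unfolding P_def by (rule sum.union_disjoint) (auto simp: S_finite)
    finally show ?thesis .
  qed
  have Ab: "sum weight (A \<inter> S n) \<le> qs (int m)" for n
    using Q_bound[of "int m" n] split[of n] unfolding eA by simp
  have Bb: "sum weight (B \<inter> S n) \<le> ps (int m)" for n
    using P_bound[of "int m" n] unfolding eB P_def by simp
  have smA: "weight summable_on A" and iA: "infsum weight A \<le> qs (int m)"
    using infsum_bound[OF _ Ab] unfolding A_def by auto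
  have smB: "weight summable_on B" and iB: "infsum weight B \<le> ps (int m)"
    using infsum_bound[OF _ Bb] unfolding B_def by auto
  have AB: "A \<union> B = {t. valid t}" unfolding A_def B_def by auto
  have disj: "A \<inter> B = {}" unfolding A_def B_def by auto
  have "infsum weight (A \<union> B) = infsum weight A + infsum weight B"
    by (rule infsum_Un_disjoint[OF smA smB disj])
  hence "infsum weight A + infsum weight B = 1" using total(2) unfolding AB by simp
  hence "infsum weight A = qs (int m)" using iA iB ps_qs[of "int m"] by simp
  thus ?thesis unfolding prob_max_ge_def A_def .
qed

theorem lemma5:
  shows "(\<lambda>m::nat. prob_max_ge (int m)) \<sim>[at_top] (\<lambda>m. 2 / (real m) ^ 2)"
proof (rule asymp_equivI')
  have "prob_max_ge (int m) = 2/((real m+1)*(real m+2))" for m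
    unfolding prob_exact qs_def by simp
  thus "((\<lambda>m. prob_max_ge (int m) / (2 / (real m)\<^sup>2)) \<longlongrightarrow> 1) at_top"
    using lim by simp
qed

end
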